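(* Let $G$ be an amenable locally compact group with left Haar measure $m$. If $(A_i)_{i\in\mathbb I}$ is a Følner net and $L\subseteq G$ is a compact symmetric unit neighborhood, then $(LA_i)_{i\in\mathbb I}$ is a strong Følner net.
   Context: $\mathcal K$: nonempty compact subsets of $G$; $\mathcal K_p$: those of positive Haar measure. Nets are indexed by a directed partially ordered set $(\mathbb I,\prec)$. For $K,A\subseteq G$: Følner boundary $\delta^KA=KA\,\triangle\, A$; strong Følner boundary $\partial_K A=K^{-1}A\cap K^{-1}(G\setminus A)$. A Følner net is a net $(A_i)$ in $\mathcal K_p$ with $\lim_i m(\delta^KA_i)/m(A_i)=0$ for every $K\in\mathcal K$; a strong Følner net is a net $(A_i)$ in $\mathcal K_p$ with $\lim_i m(\partial_KA_i)/m(A_i)=0$ for every $K\in\mathcal K$. $G$ is amenable if it admits a left-invariant mean on $L^\infty(G)$. *)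

theory Defs
  imports "HOL-Analysis.Analysis"
begin

text \<open>The group G is a type 'g carrying a (not necessarily commutative) group structure
  written additively (class group_add: + is the group product, 0 the unit, uminus the
  inverse) together with a Hausdorff topology making the operations continuous
  (class topological_group_add).\<close>

definition set_prod :: "'g::group_add set \<Rightarrow> 'g set \<Rightarrow> 'g set" where
  "set_prod K A = {k + a | k a. k \<in> K \<and> a \<in> A}"

definition set_inv :: "'g::group_add set \<Rightarrow> 'g set" where
  "set_inv K = uminus ` K"

definition folner_boundary :: "'g::group_add set \<Rightarrow> 'g set \<Rightarrow> 'g set" where
  "folner_boundary K A = (set_prod K A - A) \<union> (A - set_prod K A)"

definition strong_folner_boundary :: "'g::group_add set \<Rightarrow> 'g set \<Rightarrow> 'g set" where
  "strong_folner_boundary K A = set_prod (set_inv K) A \<inter> set_prod (set_inv K) (UNIV - A)"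

definition left_haar_measure :: "'g::topological_group_add measure \<Rightarrow> bool" where
  "left_haar_measure m \<longleftrightarrow>
     sets m = sets borel \<and>
     (\<forall>A \<in> sets borel. \<forall>x. emeasure m ((+) x ` A) = emeasure m A) \<and>
     (\<forall>K. compact K \<longrightarrow> emeasure m K < \<infinity>) \<and>
     (\<forall>U. open U \<and> U \<noteq> {} \<longrightarrow> emeasure m U > 0) \<and>
     (\<forall>A \<in> sets borel. emeasure m A = (INF U \<in> {U. open U \<and> A \<subseteq> U}. emeasure m U)) \<and>
     (\<forall>U. open U \<longrightarrow> emeasure m U = (SUP K \<in> {K. compact K \<and> K \<subseteq> U}. emeasure m K))"

text \<open>Essentially bounded measurable real functions (representatives of L^infinity(G)).\<close>
definition Linf :: "'g::topological_group_add measure \<Rightarrow> ('g \<Rightarrow> real) set" where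
  "Linf m = {f. f \<in> borel_measurable m \<and> (\<exists>C. AE x in m. \<bar>f x\<bar> \<le> C)}"

definition left_invariant_mean :: "'g::topological_group_add measure \<Rightarrow> (('g \<Rightarrow> real) \<Rightarrow> real) \<Rightarrow> bool" where
  "left_invariant_mean m \<phi> \<longleftrightarrow>
     (\<forall>f\<in>Linf m. \<forall>g\<in>Linf m. \<forall>a b. \<phi> (\<lambda>x. a * f x + b * g x) = a * \<phi> f + b * \<phi> g) \<and>
     (\<forall>f\<in>Linf m. \<forall>g\<in>Linf m. (AE x in m. f x = g x) \<longrightarrow> \<phi> f = \<phi> g) \<and>
     (\<forall>f\<in>Linf m. (AE x in m. 0 \<le> f x) \<longrightarrow> 0 \<le> \<phi> f) \<and>
     \<phi> (\<lambda>_. 1) = 1 \<and>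
     (\<forall>f\<in>Linf m. \<forall>x. \<phi> (\<lambda>y. f (- x + y)) = \<phi> f)"

definition amenable :: "'g::topological_group_add measure \<Rightarrow> bool" where
  "amenable m \<longleftrightarrow> (\<exists>\<phi>. left_invariant_mean m \<phi>)"

text \<open>Directed partially ordered index set (I, prec), I being the whole type 'i,
  and the associated filter of tails along which nets converge.\<close>
definition directed_poset :: "('i \<Rightarrow> 'i \<Rightarrow> bool) \<Rightarrow> bool" where
  "directed_poset le \<longleftrightarrow>
     (\<forall>i. le i i) \<and> (\<forall>i j k. le i j \<longrightarrow> le j k \<longrightarrow> le i k) \<and>
     (\<forall>i j. le i j \<longrightarrow> le j i \<longrightarrow> i = j) \<and> (\<forall>i j. \<exists>k. le i k \<and> le j k)"

definition net_filter :: "('i \<Rightarrow> 'i \<Rightarrow> bool) \<Rightarrow> 'i filter" where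
  "net_filter le = (INF i. principal {j. le i j})"

definition cK :: "'g::topological_space set set" where
  "cK = {K. compact K \<and> K \<noteq> {}}"

definition cKp :: "'g::topological_group_add measure \<Rightarrow> 'g set set" where
  "cKp m = {K. compact K \<and> emeasure m K > 0}"

definition folner_net :: "'g::topological_group_add measure \<Rightarrow> ('i \<Rightarrow> 'i \<Rightarrow> bool) \<Rightarrow> ('i \<Rightarrow> 'g set) \<Rightarrow> bool" where
  "folner_net m le A \<longleftrightarrow> (\<forall>i. A i \<in> cKp m) \<and>
     (\<forall>K\<in>cK. ((\<lambda>i. measure m (folner_boundary K (A i)) / measure m (A i)) \<longlongrightarrow> 0) (net_filter le))"

definition strong_folner_net :: "'g::topological_group_add measure \<Rightarrow> ('i \<Rightarrow> 'i \<Rightarrow> bool) \<Rightarrow> ('i \<Rightarrow> 'g set) \<Rightarrow> bool" where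
  "strong_folner_net m le A \<longleftrightarrow> (\<forall>i. A i \<in> cKp m) \<and>
     (\<forall>K\<in>cK. ((\<lambda>i. measure m (strong_folner_boundary K (A i)) / measure m (A i)) \<longlongrightarrow> 0) (net_filter le))"

end

theory Submission
  imports Defs
begin

lemma ltrans_eq: "(+) (c::'g::group_add) ` U = (\<lambda>y. -c + y) -` U"
proof (rule set_eqI, rule iffI)
  fix x assume "x \<in> (+) c ` U" then show "x \<in> (\<lambda>y. -c + y) -` U"
    by (auto simp: add.assoc[symmetric])
next
  fix x assume "x \<in> (\<lambda>y. -c + y) -` U"
  then show "x \<in> (+) c ` U" by (intro image_eqI[where x="-c+x"]) (auto simp: add.assoc[symmetric])
qed

lemma rtrans_eq: "(\<lambda>y. y + (c::'g::group_add)) ` U = (\<lambda>y. y + -c) -` U"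
proof (rule set_eqI, rule iffI)
  fix x assume "x \<in> (\<lambda>y. y + c) ` U" then show "x \<in> (\<lambda>y. y + -c) -` U"
    by (auto simp: add.assoc)
next
  fix x assume "x \<in> (\<lambda>y. y + -c) -` U"
  then show "x \<in> (\<lambda>y. y + c) ` U" by (intro image_eqI[where x="x + -c"]) (auto simp: add.assoc)
qed

lemma open_ltrans: "open U \<Longrightarrow> open ((+) (c::'g::topological_group_add) ` U)"
  unfolding ltrans_eq by (rule open_vimage) (auto intro!: continuous_intros)

lemma open_rtrans: "open U \<Longrightarrow> open ((\<lambda>y. y + (c::'g::topological_group_add)) ` U)"
  unfolding rtrans_eq by (rule open_vimage) (auto intro!: continuous_intros)

lemma open_set_prod: "open U \<Longrightarrow> open (set_prod K (U::'g::topological_group_add set))"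
proof -
  assume U: "open U"
  have "set_prod K U = (\<Union>k\<in>K. (+) k ` U)" unfolding set_prod_def by auto
  then show ?thesis using open_ltrans[OF U] by auto
qed

lemma compact_set_prod:
  assumes "compact K" "compact (A::'g::topological_group_add set)"
  shows "compact (set_prod K A)"
proof -
  have "set_prod K A = (\<lambda>p. fst p + snd p) ` (K \<times> A)" unfolding set_prod_def by force
  moreover have "compact ((\<lambda>p. fst p + snd p) ` (K \<times> A))"
    by (rule compact_continuous_image) (intro continuous_intros compact_Times assms)+
  ultimately show ?thesis by simp
qed

lemma main_incl:
  fixes K L A :: "'g::topological_group_add set"
  assumes F: "K \<subseteq> (\<Union>k\<in>F. (\<lambda>v. v + k) ` L)" and Linv: "set_inv L = L"
  shows "strong_folner_boundary K (set_prod L A) \<subseteq>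
     (\<Union>k\<in>F. (+) (-k) ` (set_prod (set_prod L (set_prod K (set_prod (set_inv K) L))) A - A))"
proof
  fix x assume "x \<in> strong_folner_boundary K (set_prod L A)"
  then obtain k1 l a k2 c where k1: "k1 \<in> K" and l: "l \<in> L" and a: "a \<in> A" and x1: "x = -k1 + (l + a)"
    and k2: "k2 \<in> K" and c: "c \<notin> set_prod L A" and x2: "x = -k2 + c"
    unfolding strong_folner_boundary_def set_prod_def set_inv_def by blast
  from F k2 obtain k v where k: "k \<in> F" and v: "v \<in> L" and kv: "k2 = v + k" by blast
  have c2: "c = k2 + x" using x2 by (simp add: add.assoc[symmetric])
  have mv: "-v \<in> L" using v Linv unfolding set_inv_def by blast
  have kk: "k = -v + k2" using kv by (simp add: add.assoc[symmetric])
  have kx: "k + x = -v + (k2 + (-k1 + l)) + a"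
    unfolding kk x1 by (simp only: add.assoc)
  have "k + x \<in> set_prod (set_prod L (set_prod K (set_prod (set_inv K) L))) A"
    unfolding kx set_prod_def set_inv_def using mv k2 k1 l a by blast
  moreover have "k + x \<notin> A"
  proof
    assume "k + x \<in> A"
    then have "v + (k + x) \<in> set_prod L A" using v unfolding set_prod_def by blast
    then show False using c c2 kv by (simp add: add.assoc)
  qed
  ultimately have "k + x \<in> set_prod (set_prod L (set_prod K (set_prod (set_inv K) L))) A - A" by blast
  then show "x \<in> (\<Union>k\<in>F. (+) (-k) ` (set_prod (set_prod L (set_prod K (set_prod (set_inv K) L))) A - A))"
    using k by (intro UN_I[OF k] image_eqI[where x="k+x"]) (auto simp: add.assoc[symmetric])
qed

lemma trans_sets:
  fixes S :: "'g::topological_group_add set"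
  assumes "S \<in> sets borel"
  shows "(+) c ` S \<in> sets borel"
proof -
  have "(\<lambda>y. -c + y) \<in> borel_measurable borel"
    by (rule borel_measurable_continuous_onI) (intro continuous_intros)
  from measurable_sets[OF this assms] show ?thesis unfolding ltrans_eq by simp
qed

lemma compact_set_inv: "compact K \<Longrightarrow> compact (set_inv (K::'g::topological_group_add set))"
  unfolding set_inv_def by (rule compact_continuous_image) (intro continuous_intros)

theorem proposition5p9:
  fixes m :: "'g::{topological_group_add, t2_space} measure"
    and le :: "'i \<Rightarrow> 'i \<Rightarrow> bool"
    and A :: "'i \<Rightarrow> 'g set"
    and L :: "'g set"
  assumes "locally_compact_space (euclidean :: 'g topology)"
    and "left_haar_measure m"
    and "amenable m"
    and "directed_poset le"
    and "folner_net m le A"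
    and "compact L" and "set_inv L = L" and "0 \<in> interior L"
  shows "strong_folner_net m le (\<lambda>i. set_prod L (A i))"
proof -
  have sets: "sets m = sets borel" and inv: "\<And>S x. S \<in> sets borel \<Longrightarrow> emeasure m ((+) x ` S) = emeasure m S"
    and cfin: "\<And>S. compact S \<Longrightarrow> emeasure m S < \<infinity>"
    using assms(2) unfolding left_haar_measure_def by auto
  have csets: "S \<in> sets m" if "compact S" for S
    unfolding sets using that by (intro borel_closed compact_imp_closed)
  have cfm: "S \<in> fmeasurable m" if "compact S" for S
    using csets[OF that] cfin[OF that] by (rule fmeasurableI)
  have Ac: "compact (A i)" and Apos: "emeasure m (A i) > 0" for i
    using assms(5) unfolding folner_net_def cKp_def by auto
  have Alim: "\<And>K. K \<in> cK \<Longrightarrow> ((\<lambda>i. measure m (folner_boundary K (A i)) / measure m (A i)) \<longlongrightarrow> 0) (net_filter le)"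
    using assms(5) unfolding folner_net_def by auto
  have L0: "0 \<in> L" using assms(8) interior_subset by blast
  have ALA: "A i \<subseteq> set_prod L (A i)" for i
    unfolding set_prod_def using L0 by force
  have LAc: "compact (set_prod L (A i))" for i by (rule compact_set_prod[OF assms(6) Ac])
  have Ameas: "measure m (A i) > 0" for i
    using Apos[of i] cfin[OF Ac[of i]] by (simp add: measure_def enn2real_positive_iff)
  have mono: "measure m (A i) \<le> measure m (set_prod L (A i))" for i
    by (rule measure_mono_fmeasurable[OF ALA csets[OF Ac] cfm[OF LAc]])
  show ?thesis
    unfolding strong_folner_net_def
  proof (intro conjI allI ballI)
    fix i show "set_prod L (A i) \<in> cKp m"
      unfolding cKp_def using LAc[of i] Apos[of i] emeasure_mono[OF ALA[of i] csets[OF LAc]]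
      by auto
  next
    fix K :: "'g set" assume K: "K \<in> cK"
    then have Kc: "compact K" and Kne: "K \<noteq> {}" unfolding cK_def by auto
    have cover: "K \<subseteq> (\<Union>k\<in>K. (\<lambda>v. v + k) ` interior L)"
    proof
      fix k assume "k \<in> K" then show "k \<in> (\<Union>k\<in>K. (\<lambda>v. v + k) ` interior L)"
        using assms(8) by (intro UN_I[of k] image_eqI[of _ _ 0]) auto
    qed
    obtain F where FK: "F \<subseteq> K" and Ffin: "finite F"
      and FC: "K \<subseteq> (\<Union>k\<in>F. (\<lambda>v. v + k) ` interior L)"
      by (rule compactE_image[OF Kc _ cover]) (auto intro: open_rtrans)
    have FC': "K \<subseteq> (\<Union>k\<in>F. (\<lambda>v. v + k) ` L)"
      using FC interior_subset by blast
    define N where "N = set_prod L (set_prod K (set_prod (set_inv K) L))"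
    have Nc: "compact N" unfolding N_def
      by (intro compact_set_prod compact_set_inv Kc assms(6))
    obtain k0 where k0: "k0 \<in> K" using Kne by blast
    have "0 + (k0 + (-k0 + 0)) \<in> N" unfolding N_def set_prod_def set_inv_def
      using L0 k0 by blast
    then have NK: "N \<in> cK" unfolding cK_def using Nc by auto
    define S where "S i = set_prod N (A i) - A i" for i
    have NAc: "compact (set_prod N (A i))" for i by (rule compact_set_prod[OF Nc Ac])
    have Sfm: "S i \<in> fmeasurable m" for i
      unfolding S_def by (intro fmeasurable_Diff cfm NAc csets Ac)
    have Sb: "S i \<in> sets borel" for i using Sfm[of i] sets by auto
    have trfm: "(+) (-k) ` S i \<in> fmeasurable m" for k i
      using inv[OF Sb, of "-k"] Sfm[of i] sets trans_sets[OF Sb]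
      by (auto simp: fmeasurable_def)
    have trm: "measure m ((+) (-k) ` S i) = measure m (S i)" for k i
      using inv[OF Sb, of "-k"] by (simp add: measure_def)
    have bfm: "folner_boundary N (A i) \<in> fmeasurable m" for i
    proof (rule fmeasurableI2)
      show "set_prod N (A i) \<union> A i \<in> fmeasurable m" by (intro fmeasurable.Un cfm NAc Ac)
      show "folner_boundary N (A i) \<subseteq> set_prod N (A i) \<union> A i" unfolding folner_boundary_def by auto
      show "folner_boundary N (A i) \<in> sets m" unfolding folner_boundary_def
        by (intro sets.Un sets.Diff csets NAc Ac)
    qed
    have Sle: "measure m (S i) \<le> measure m (folner_boundary N (A i))" for i
      by (rule measure_mono_fmeasurable[OF _ fmeasurableD[OF Sfm] bfm])
        (auto simp: S_def folner_boundary_def)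
    have sfbsets: "strong_folner_boundary K (set_prod L (A i)) \<in> sets m" for i
    proof -
      have "compact (set_prod (set_inv K) (set_prod L (A i)))"
        by (intro compact_set_prod compact_set_inv Kc LAc)
      moreover have "open (set_prod (set_inv K) (UNIV - set_prod L (A i)))"
        by (intro open_set_prod open_Diff open_UNIV compact_imp_closed LAc)
      ultimately show ?thesis unfolding strong_folner_boundary_def sets
        by (intro sets.Int borel_open borel_closed compact_imp_closed)
    qed
    have bound: "measure m (strong_folner_boundary K (set_prod L (A i))) / measure m (set_prod L (A i))
       \<le> real (card F) * (measure m (folner_boundary N (A i)) / measure m (A i))" for i
    proof -
      have "measure m (strong_folner_boundary K (set_prod L (A i)))
          \<le> measure m (\<Union>k\<in>F. (+) (-k) ` S i)"
        apply (rule measure_mono_fmeasurable[OF _ sfbsets])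
        using main_incl[OF FC' assms(7), of "A i"] apply (simp add: S_def N_def)
        by (intro fmeasurable.finite_UN Ffin trfm)
      also have "\<dots> \<le> (\<Sum>k\<in>F. measure m ((+) (-k) ` S i))"
        by (intro measure_UNION_le Ffin fmeasurableD[OF trfm])
      also have "\<dots> = real (card F) * measure m (S i)" by (simp add: trm)
      also have "\<dots> \<le> real (card F) * measure m (folner_boundary N (A i))"
        by (intro mult_left_mono Sle) auto
      finally have 1: "measure m (strong_folner_boundary K (set_prod L (A i)))
          \<le> real (card F) * measure m (folner_boundary N (A i))" .
      have "measure m (strong_folner_boundary K (set_prod L (A i))) / measure m (set_prod L (A i))
          \<le> measure m (strong_folner_boundary K (set_prod L (A i))) / measure m (A i)"
        by (intro divide_left_mono mono Ameas mult_pos_pos measure_nonneg) (use Ameas[of i] mono[of i] in linarith)+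
      also have "\<dots> \<le> real (card F) * measure m (folner_boundary N (A i)) / measure m (A i)"
        by (intro divide_right_mono 1) simp
      finally show ?thesis by simp
    qed
    have lim2: "((\<lambda>i. real (card F) * (measure m (folner_boundary N (A i)) / measure m (A i))) \<longlongrightarrow> 0) (net_filter le)"
      using tendsto_mult[OF tendsto_const Alim[OF NK], of "real (card F)"] by simp
    show "((\<lambda>i. measure m (strong_folner_boundary K (set_prod L (A i))) / measure m (set_prod L (A i))) \<longlongrightarrow> 0) (net_filter le)"
      by (rule tendsto_sandwich[OF _ _ tendsto_const lim2]) (intro always_eventually allI divide_nonneg_nonneg measure_nonneg bound)+
  qed
qed

end
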